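(* Let $n\geq 3$ be odd and $v=2(n+1)$. Then a $(K_2,K_{1,n})$-$URD(v;1,s)$ exists.
   Context: For graphs $H_1,H_2$, an $(H_1,H_2)$-$URD(v;r,s)$ is a decomposition of the edge set of the complete graph $K_v$ into edge-disjoint subgraphs (blocks), where the blocks are partitioned into $r+s$ classes, each class being a spanning collection of vertex-disjoint blocks (every vertex of $K_v$ lies in exactly one block of the class), such that $r$ classes consist only of copies of $H_1$ and $s$ classes consist only of copies of $H_2$. Here $K_2$ is a single edge and $K_{1,n}$ is the star with $n$ edges. *)

theory Defs
  imports Main
begin

type_synonym 'a graph = "'a set \<times> 'a set set"

definition pair_edges :: "'a set \<Rightarrow> 'a set set" where
  "pair_edges V = {e. e \<subseteq> V \<and> card e = 2}"

definition is_graph :: "'a graph \<Rightarrow> bool" where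
  "is_graph G \<longleftrightarrow> snd G \<subseteq> pair_edges (fst G)"

definition graph_iso :: "'a graph \<Rightarrow> 'b graph \<Rightarrow> bool" where
  "graph_iso G H \<longleftrightarrow> (\<exists>f. bij_betw f (fst G) (fst H) \<and> (\<lambda>e. f ` e) ` snd G = snd H)"

definition complete_graph :: "nat \<Rightarrow> nat graph" where
  "complete_graph v = ({..<v}, pair_edges {..<v})"

definition K2 :: "nat graph" where
  "K2 = ({0, 1}, {{0, 1}})"

definition star :: "nat \<Rightarrow> nat graph" where
  "star n = ({0..n}, {{0, i} | i. i \<in> {1..n}})"

definition URD :: "'b graph \<Rightarrow> 'c graph \<Rightarrow> nat \<Rightarrow> nat \<Rightarrow> nat \<Rightarrow> bool" where
  "URD H1 H2 v r s \<longleftrightarrow>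
     (\<exists>C :: nat \<Rightarrow> nat graph set.
        (\<forall>i<r+s. \<forall>B\<in>C i. is_graph B \<and> fst B \<subseteq> {..<v}) \<and>
        (\<forall>i<r+s. \<forall>x<v. \<exists>!B. B \<in> C i \<and> x \<in> fst B) \<and>
        (\<forall>i<r. \<forall>B\<in>C i. graph_iso B H1) \<and>
        (\<forall>i. r \<le> i \<and> i < r+s \<longrightarrow> (\<forall>B\<in>C i. graph_iso B H2)) \<and>
        (\<forall>e\<in>snd (complete_graph v). \<exists>!p. fst p < r+s \<and> snd p \<in> C (fst p) \<and> e \<in> snd (snd p)))"

end

theory Submission
  imports Defs
begin

definition LL :: "nat \<Rightarrow> nat \<Rightarrow> nat set" where
  "LL m c = (if c < m then {c+1..<m} \<union> {m..<m+c} else {c+1..<2*m} \<union> {0..<c-m})"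

definition Bst :: "nat \<Rightarrow> nat \<Rightarrow> nat graph" where
  "Bst m c = (insert c (LL m c), (\<lambda>w. {c,w}) ` LL m c)"

definition Mt :: "nat \<Rightarrow> nat \<Rightarrow> nat graph" where
  "Mt m i = ({i, m+i}, {{i, m+i}})"

definition Cls :: "nat \<Rightarrow> nat \<Rightarrow> nat graph set" where
  "Cls m k = (if k = 0 then Mt m ` {..<m} else {Bst m (k-1), Bst m (m+k-1)})"

lemma LL_mem: "w \<in> LL m c \<longleftrightarrow> (if c < m then (c < w \<and> w < m) \<or> (m \<le> w \<and> w < m + c)
   else (c < w \<and> w < 2*m) \<or> (w + m < c))"
  unfolding LL_def by auto

lemma LL_bound: "c < 2*m \<Longrightarrow> w \<in> LL m c \<Longrightarrow> w < 2*m \<and> w \<noteq> c \<and> w \<noteq> c + m \<and> c \<noteq> w + m"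
  unfolding LL_mem by (auto split: if_splits)

lemma LL_antisym: "a < 2*m \<Longrightarrow> b < 2*m \<Longrightarrow> b \<in> LL m a \<Longrightarrow> a \<in> LL m b \<Longrightarrow> False"
  unfolding LL_mem by (auto split: if_splits)

lemma LL_total: "a < 2*m \<Longrightarrow> b < 2*m \<Longrightarrow> a \<noteq> b \<Longrightarrow> b \<noteq> a + m \<Longrightarrow> a \<noteq> b + m
   \<Longrightarrow> b \<in> LL m a \<or> a \<in> LL m b"
  unfolding LL_mem by (auto split: if_splits)

lemma LL_part: "j < m \<Longrightarrow> x < 2*m \<Longrightarrow>
   (x \<in> insert j (LL m j)) \<noteq> (x \<in> insert (m+j) (LL m (m+j)))"
  unfolding insert_iff LL_mem by auto

lemma LL_finite: "finite (LL m c)"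
  unfolding LL_def by auto

lemma LL_card: "c < 2*m \<Longrightarrow> card (LL m c) = m - 1"
proof (cases "c < m")
  case True
  then have "LL m c = {c+1..<m} \<union> {m..<m+c}" unfolding LL_def by simp
  then show ?thesis using True
    by (simp add: card_Un_disjoint)
next
  case False
  assume "c < 2*m"
  from False have "LL m c = {c+1..<2*m} \<union> {0..<c-m}" unfolding LL_def by simp
  then show ?thesis using False \<open>c < 2*m\<close>
    by (simp add: card_Un_disjoint)
qed

lemma star_iso:
  assumes "finite L" "c \<notin> L" "card L = n"
  shows "graph_iso (insert c L, (\<lambda>w. {c,w}) ` L) (star n)"
proof -
  have "card {1..n} = n" by simp
  then obtain g where g: "bij_betw g L {1..n}"
    using assms finite_same_card_bij by (metis finite_atLeastAtMost)
  define f where "f = (\<lambda>x. if x = c then 0 else g x)"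
  have gi: "g ` L = {1..n}" using g by (simp add: bij_betw_def)
  have fL: "f ` L = g ` L" using assms(2) unfolding f_def by (auto intro!: image_cong)
  have "inj_on f (insert c L)"
  proof -
    have "inj_on f L" using g assms(2) unfolding f_def bij_betw_def inj_on_def by auto
    moreover have "f c \<notin> f ` (L - {c})" using gi fL assms(2) unfolding f_def by force
    ultimately show ?thesis by simp
  qed
  moreover have "f ` insert c L = {0..n}"
    using fL gi by (auto simp: f_def)
  ultimately have b: "bij_betw f (insert c L) {0..n}" by (simp add: bij_betw_def)
  have "(\<lambda>e. f ` e) ` ((\<lambda>w. {c,w}) ` L) = (\<lambda>i. {0,i}) ` (g ` L)"
  proof -
    have "(\<lambda>e. f ` e) ` ((\<lambda>w. {c,w}) ` L) = (\<lambda>w. {0, g w}) ` L"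
      using assms(2) by (force simp: f_def image_image intro!: image_cong)
    also have "\<dots> = (\<lambda>i. {0,i}) ` (g ` L)" by (simp add: image_image)
    finally show ?thesis .
  qed
  also have "\<dots> = snd (star n)" unfolding gi star_def by auto
  finally show ?thesis using b unfolding graph_iso_def star_def by auto
qed

lemma Cls_cases:
  assumes "k < 1 + m" "B \<in> Cls m k"
  shows "(k = 0 \<and> (\<exists>i<m. B = Mt m i)) \<or> (\<exists>j<m. \<exists>c. k = Suc j \<and> B = Bst m c \<and> c < 2*m \<and> c \<in> {j, m+j})"
  using assms unfolding Cls_def by (cases k) (auto split: if_splits)

lemma Bst_graph: "c < 2*m \<Longrightarrow> is_graph (Bst m c) \<and> fst (Bst m c) \<subseteq> {..<2*m}"
  unfolding is_graph_def Bst_def pair_edges_def using LL_bound[of c m]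
  by (auto simp: card_2_iff) metis

lemma Mt_graph: "i < m \<Longrightarrow> is_graph (Mt m i) \<and> fst (Mt m i) \<subseteq> {..<2*m}"
  unfolding is_graph_def Mt_def pair_edges_def
  by auto

lemma Mt_iso: "i < m \<Longrightarrow> graph_iso (Mt m i) K2"
proof -
  assume "i < m"
  define f where "f = (\<lambda>x::nat. if x = i then 0::nat else 1)"
  have "bij_betw f {i, m+i} {0,1}" using \<open>i<m\<close> unfolding bij_betw_def inj_on_def f_def by auto
  moreover have "(\<lambda>e. f ` e) ` {{i, m+i}} = {{0,1}}" using \<open>i<m\<close> unfolding f_def by auto
  ultimately show ?thesis unfolding graph_iso_def Mt_def K2_def by auto
qed

lemma Bst_iso: "c < 2*m \<Longrightarrow> graph_iso (Bst m c) (star (m-1))"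
proof -
  assume c: "c < 2*m"
  have "c \<notin> LL m c" using LL_bound[OF c] by auto
  then show ?thesis unfolding Bst_def using star_iso[OF LL_finite[of m c]] LL_card[OF c] by auto
qed

lemma vert_unique:
  assumes "k < 1 + m" "x < 2*m"
  shows "\<exists>!B. B \<in> Cls m k \<and> x \<in> fst B"
proof (cases k)
  case 0
  define i where "i = (if x < m then x else x - m)"
  have i: "i < m" "x \<in> fst (Mt m i)" using assms unfolding i_def Mt_def by auto
  show ?thesis
  proof (rule ex1I[of _ "Mt m i"])
    show "Mt m i \<in> Cls m k \<and> x \<in> fst (Mt m i)" using i 0 unfolding Cls_def by auto
  next
    fix B assume "B \<in> Cls m k \<and> x \<in> fst B"
    then obtain i' where "i' < m" "B = Mt m i'" "x \<in> {i', m+i'}"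
      using 0 unfolding Cls_def Mt_def by auto
    then show "B = Mt m i" using i unfolding i_def Mt_def by auto
  qed
next
  case (Suc j)
  have j: "j < m" using assms Suc by auto
  have cl: "Cls m k = {Bst m j, Bst m (m+j)}" using Suc unfolding Cls_def by simp
  have P: "(x \<in> fst (Bst m j)) \<noteq> (x \<in> fst (Bst m (m+j)))"
    using LL_part[OF j assms(2)] unfolding Bst_def by simp
  show ?thesis
  proof (cases "x \<in> fst (Bst m j)")
    case True
    show ?thesis by (rule ex1I[of _ "Bst m j"]) (use True P in \<open>auto simp: cl\<close>)
  next
    case False
    show ?thesis by (rule ex1I[of _ "Bst m (m+j)"]) (use False P in \<open>auto simp: cl\<close>)
  qed
qed

lemma edge_exists:
  assumes "m \<ge> 1" "a < 2*m" "b < 2*m" "a \<noteq> b"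
  shows "\<exists>p. fst p < 1 + m \<and> snd p \<in> Cls m (fst p) \<and> {a,b} \<in> snd (snd p)"
proof (cases "b = a + m \<or> a = b + m")
  case True
  then obtain i where i: "i < m" "{a,b} = {i, m+i}"
  proof
    assume "b = a + m" then show ?thesis using assms that[of a] by (auto simp: add.commute)
  next
    assume "a = b + m" then show ?thesis using assms that[of b] by (auto simp: add.commute)
  qed
  show ?thesis
    by (rule exI[of _ "(0, Mt m i)"]) (use i in \<open>auto simp: Cls_def Mt_def\<close>)
next
  case False
  have key: "\<exists>p. fst p < 1 + m \<and> snd p \<in> Cls m (fst p) \<and> {c,w} \<in> snd (snd p)"
    if "c < 2*m" "w \<in> LL m c" for c w
  proof -
    define j where "j = (if c < m then c else c - m)"
    have "j < m" "Bst m c \<in> Cls m (Suc j)" using that unfolding j_def Cls_def by auto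
    moreover have "{c,w} \<in> snd (Bst m c)" using that unfolding Bst_def by auto
    ultimately show ?thesis by (intro exI[of _ "(Suc j, Bst m c)"]) auto
  qed
  from LL_total[OF assms(2,3,4)] False
  have "b \<in> LL m a \<or> a \<in> LL m b" by auto
  then show ?thesis
  proof
    assume "b \<in> LL m a" then show ?thesis using key[OF assms(2)] by auto
  next
    assume "a \<in> LL m b" then show ?thesis using key[OF assms(3), of a] by (auto simp: insert_commute)
  qed
qed

lemma Bst_edge: "e \<in> snd (Bst m c) \<Longrightarrow> \<exists>w. w \<in> LL m c \<and> e = {c,w}"
  unfolding Bst_def by auto

lemma edge_unique:
  assumes "m \<ge> 1" 
    and p: "fst p < 1 + m" "snd p \<in> Cls m (fst p)" "e \<in> snd (snd p)"
    and q: "fst q < 1 + m" "snd q \<in> Cls m (fst q)" "e \<in> snd (snd q)"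
  shows "p = q"
proof -
  have starcase: "False" if "i < m" "c < 2*m" "e = {i, m+i}" "w \<in> LL m c" "e = {c,w}" for i c w
    using that LL_bound[of c m w] by (auto simp: doubleton_eq_iff)
  have c2: "c < 2*m" if "j < m" "c = j \<or> c = m + j" for j c using that by auto
  from Cls_cases[OF p(1,2)] Cls_cases[OF q(1,2)] show ?thesis
  proof (elim disjE conjE exE)
    fix i i' assume "fst p = 0" "i < m" "snd p = Mt m i" "fst q = 0" "i' < m" "snd q = Mt m i'"
    then show ?thesis using p(3) q(3) by (auto simp: Mt_def doubleton_eq_iff prod_eq_iff)
  next
    fix i j c assume "i < m" "snd p = Mt m i" "snd q = Bst m c" "c < 2*m"
    then show ?thesis using p(3) q(3) Bst_edge starcase unfolding Mt_def by (metis snd_conv singletonD)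
  next
    fix i j c assume "i < m" "snd q = Mt m i" "snd p = Bst m c" "c < 2*m"
    then show ?thesis using p(3) q(3) Bst_edge starcase unfolding Mt_def by (metis snd_conv singletonD)
  next
    fix j j' c c' assume A: "j < m" "fst p = Suc j" "snd p = Bst m c" "c < 2*m" "c \<in> {j, m + j}"
      "j' < m" "fst q = Suc j'" "snd q = Bst m c'" "c' < 2*m" "c' \<in> {j', m + j'}"
    obtain w where w: "w \<in> LL m c" "e = {c,w}" using Bst_edge[of e m c] p(3) A(3) by auto
    obtain w' where w': "w' \<in> LL m c'" "e = {c',w'}" using Bst_edge[of e m c'] q(3) A(8) by auto
    have cc: "c < 2*m" "c' < 2*m" using A by auto
    have c: "c = j \<or> c = m + j" "snd p = Bst m c" and c': "c' = j' \<or> c' = m + j'" "snd q = Bst m c'" using A by auto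
    show ?thesis
    proof (cases "c = c'")
      case True
      then have "j = j'" using c c' A by auto
      then show ?thesis using A c c' True by (simp add: prod_eq_iff)
    next
      case False
      then have "c' = w" "c = w'" using w w' by (auto simp: doubleton_eq_iff)
      then show ?thesis using LL_antisym[OF cc] w w' by auto
    qed
  qed
qed

lemma main: "m \<ge> 1 \<Longrightarrow> URD K2 (star (m-1)) (2*m) 1 m"
  unfolding URD_def
proof (intro exI[of _ "Cls m"] conjI allI ballI impI)
  assume m: "m \<ge> 1"
  fix i B assume "i < 1 + m" "B \<in> Cls m i"
  from Cls_cases[OF this] have "(\<exists>i<m. B = Mt m i) \<or> (\<exists>c<2*m. B = Bst m c)"
    by blast
  then show "is_graph B" "fst B \<subseteq> {..<2*m}" using Mt_graph Bst_graph by blast+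
next
  fix i x assume "i < 1 + m" "x < 2*m"
  then show "\<exists>!B. B \<in> Cls m i \<and> x \<in> fst B" by (rule vert_unique)
next
  fix i B assume "i < 1" "B \<in> Cls m i"
  then show "graph_iso B K2" using Mt_iso unfolding Cls_def by auto
next
  fix i B assume "1 \<le> i \<and> i < 1 + m" "B \<in> Cls m i"
  with Cls_cases[of i m B] have "\<exists>c<2*m. B = Bst m c" by auto
  then show "graph_iso B (star (m-1))" using Bst_iso by blast
next
  fix e assume m: "m \<ge> 1" and "e \<in> snd (complete_graph (2*m))"
  then obtain a b where ab: "a < 2*m" "b < 2*m" "a \<noteq> b" "e = {a,b}"
    unfolding complete_graph_def pair_edges_def by (auto simp: card_2_iff)
  show "\<exists>!p. fst p < 1 + m \<and> snd p \<in> Cls m (fst p) \<and> e \<in> snd (snd p)"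
    using edge_exists[OF m ab(1-3)] edge_unique[OF m] ab(4) by blast
qed

theorem lemma11:
  fixes n v :: nat
  assumes "n \<ge> 3" and "odd n" and "v = 2 * (n + 1)"
  shows "\<exists>s. URD K2 (star n) v 1 s"
  using main[of "n+1"] assms by auto

end
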